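(* Let $0<\varepsilon\le 1/2$, let $X\subset\mathbb{R}^d$ be a finite nonempty (multi)set with $n=|X|$, and $C\subset\mathbb{R}^d$ a finite nonempty set. Define $R\ge0$ by $R^2 = \frac{\varepsilon^2}{41}\cdot\frac{\Phi(C,X)}{n}$, let $X^{near} = \{x\in X: \min_{c\in C}\|x-c\|\le R\}$ and $\bar n = |X^{near}|$. Then $\Delta(X)\ge\frac{16\,\bar n}{\varepsilon^2}R^2$.
   Context: $\mu(Y)$ denotes the centroid of a finite multiset $Y$, $\Delta(Y)=\sum_{y\in Y}\|y-\mu(Y)\|^2$, and $\Phi(C,Y)=\sum_{y\in Y}\min_{c\in C}\|y-c\|^2$. *)

theory Defs
  imports "HOL-Analysis.Analysis" "HOL-Library.Multiset"
begin

definition centroid :: "'a::euclidean_space multiset \<Rightarrow> 'a" where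
  "centroid Y = (1 / real (size Y)) *\<^sub>R (\<Sum>\<^sub># Y)"

definition Delta :: "'a::euclidean_space multiset \<Rightarrow> real" where
  "Delta Y = (\<Sum>y\<in>#Y. (norm (y - centroid Y))\<^sup>2)"

definition Phi :: "'a::euclidean_space set \<Rightarrow> 'a multiset \<Rightarrow> real" where
  "Phi C Y = (\<Sum>y\<in>#Y. Min ((\<lambda>c. (norm (y - c))\<^sup>2) ` C))"

end

theory Submission
  imports Defs
begin

lemma msum_filter_le:
  fixes f :: "'b \<Rightarrow> real"
  assumes "\<And>x. x \<in># X \<Longrightarrow> f x \<ge> 0"
  shows "(\<Sum>x\<in>#filter_mset P X. f x) \<le> (\<Sum>x\<in>#X. f x)"
  using assms
proof (induction X)
  case empty then show ?case by simp
next
  case (add x X)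
  have h: "(\<Sum>x\<in>#filter_mset P X. f x) \<le> (\<Sum>x\<in>#X. f x)" using add by simp
  have "f x \<ge> 0" using add.prems by simp
  then show ?case using h by (cases "P x") simp_all
qed

lemma msum_lower:
  fixes f :: "'b \<Rightarrow> real"
  assumes "\<And>x. x \<in># X \<Longrightarrow> f x \<ge> b"
  shows "real (size X) * b \<le> (\<Sum>x\<in>#X. f x)"
  using assms
proof (induction X)
  case empty then show ?case by simp
next
  case (add x X)
  have h: "real (size X) * b \<le> (\<Sum>x\<in>#X. f x)" using add by simp
  have "f x \<ge> b" using add.prems by simp
  then show ?case using h by (simp add: algebra_simps)
qed

lemma msum_sub:
  fixes X :: "'a::euclidean_space multiset"
  shows "(\<Sum>x\<in>#X. (x - m) \<bullet> v) = (\<Sum>\<^sub># X - real (size X) *\<^sub>R m) \<bullet> v"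
  by (induction X) (simp_all add: algebra_simps inner_diff_left inner_add_left)
lemma nsq:
  fixes a b :: "'a::real_inner"
  shows "(norm (a + b))\<^sup>2 = (norm a)\<^sup>2 + 2 * (a \<bullet> b) + (norm b)\<^sup>2"
  by (simp add: power2_norm_eq_inner inner_add_left inner_add_right inner_commute)

lemma parallel_axis:
  fixes X :: "'a::euclidean_space multiset" and c :: 'a
  assumes "X \<noteq> {#}"
  shows "(\<Sum>x\<in>#X. (norm (x - c))\<^sup>2) = Delta X + real (size X) * (norm (centroid X - c))\<^sup>2"
proof -
  let ?m = "centroid X"
  have n0: "real (size X) \<noteq> 0" using assms by auto
  have S: "\<Sum>\<^sub># X - real (size X) *\<^sub>R ?m = 0"
    using n0 by (simp add: centroid_def)
  have e: "\<And>x. (norm (x - c))\<^sup>2 = (norm (x - ?m))\<^sup>2 + 2 * ((x - ?m) \<bullet> (?m - c)) + (norm (?m - c))\<^sup>2"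
  proof -
    fix x
    have "x - c = (x - ?m) + (?m - c)" by simp
    then have "(norm (x - c))\<^sup>2 = (norm ((x - ?m) + (?m - c)))\<^sup>2" by metis
    also have "\<dots> = (norm (x - ?m))\<^sup>2 + 2 * ((x - ?m) \<bullet> (?m - c)) + (norm (?m - c))\<^sup>2"
      by (rule nsq)
    finally show "(norm (x - c))\<^sup>2 = (norm (x - ?m))\<^sup>2 + 2 * ((x - ?m) \<bullet> (?m - c)) + (norm (?m - c))\<^sup>2" .
  qed
  have "(\<Sum>x\<in>#X. (norm (x - c))\<^sup>2) = (\<Sum>x\<in>#X. (norm (x - ?m))\<^sup>2 + 2 * ((x - ?m) \<bullet> (?m - c)) + (norm (?m - c))\<^sup>2)"
    by (rule arg_cong[where f=sum_mset], rule image_mset_cong, rule e)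
  also have "\<dots> = (\<Sum>x\<in>#X. (norm (x - ?m))\<^sup>2) + 2 * (\<Sum>x\<in>#X. (x - ?m) \<bullet> (?m - c)) + real (size X) * (norm (?m - c))\<^sup>2"
    by (simp add: sum_mset.distrib sum_mset_distrib_left)
  also have "(\<Sum>x\<in>#X. (x - ?m) \<bullet> (?m - c)) = 0"
    by (simp only: msum_sub S inner_zero_left)
  finally show ?thesis by (simp add: Delta_def)
qed

theorem mainTheorem9:
  fixes eps R :: real and X :: "'a::euclidean_space multiset" and C :: "'a set"
  assumes "0 < eps" and "eps \<le> 1/2"
    and "X \<noteq> {#}"
    and "finite C" and "C \<noteq> {}"
    and "R \<ge> 0"
    and "R\<^sup>2 = (eps\<^sup>2 / 41) * (Phi C X / real (size X))"
  shows "Delta X \<ge> 16 * real (size (filter_mset (\<lambda>x. Min ((\<lambda>c. norm (x - c)) ` C) \<le> R) X)) / eps\<^sup>2 * R\<^sup>2"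
proof -
  define N where "N = filter_mset (\<lambda>x. Min ((\<lambda>c. norm (x - c)) ` C) \<le> R) X"
  define m where "m = real (size N)"
  define n where "n = real (size X)"
  define \<mu> where "\<mu> = centroid X"
  define D where "D = Min ((\<lambda>c. norm (\<mu> - c)) ` C)"
  define P where "P = Phi C X"
  define De where "De = Delta X"
  have fin: "finite ((\<lambda>c. norm (x - c)) ` C)" "((\<lambda>c. norm (x - c)) ` C) \<noteq> {}" for x :: 'a
    using assms(4,5) by auto
  have npos: "n > 0" using assms(3) by (simp add: n_def nonempty_has_size)
  have mn: "m \<le> n" "0 \<le> m" unfolding m_def n_def N_def by auto
  have De0: "De \<ge> 0" unfolding De_def Delta_def using msum_lower[where X=X and f="\<lambda>y. (norm (y - centroid X))\<^sup>2" and b=0] by simp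
  obtain c0 where c0: "c0 \<in> C" "norm (\<mu> - c0) = D"
    using Min_in[OF fin(1) fin(2), of \<mu>] unfolding D_def by auto
  have D0: "D \<ge> 0" using c0 by auto
  have PhiLe: "P \<le> De + n * D\<^sup>2"
  proof -
    have "P \<le> (\<Sum>x\<in>#X. (norm (x - c0))\<^sup>2)"
      unfolding P_def Phi_def
      by (rule sum_mset_mono) (use assms(4) c0 in auto)
    also have "\<dots> = De + n * D\<^sup>2"
      using parallel_axis[OF assms(3), of c0] c0 by (simp add: De_def n_def \<mu>_def)
    finally show ?thesis .
  qed
  have near: "m * (D - R)\<^sup>2 \<le> De" if "D \<ge> R"
  proof -
    have "m * (D - R)\<^sup>2 \<le> (\<Sum>x\<in>#N. (norm (x - \<mu>))\<^sup>2)"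
      unfolding m_def
    proof (rule msum_lower)
      fix y assume "y \<in># N"
      then have yR: "Min ((\<lambda>c. norm (y - c)) ` C) \<le> R" by (simp add: N_def)
      obtain c where c: "c \<in> C" "norm (y - c) = Min ((\<lambda>c. norm (y - c)) ` C)"
        using Min_in[OF fin(1) fin(2), of y] by auto
      have "D \<le> norm (\<mu> - c)" unfolding D_def using c(1) assms(4) by auto
      also have "\<dots> \<le> norm (\<mu> - y) + norm (y - c)" using norm_triangle_ineq[of "\<mu> - y" "y - c"] by simp
      finally have "D - R \<le> norm (y - \<mu>)" using c yR by (simp add: norm_minus_commute)
      then show "(D - R)\<^sup>2 \<le> (norm (y - \<mu>))\<^sup>2"
        using that by (intro power_mono) auto
    qed
    also have "\<dots> \<le> De" unfolding N_def De_def Delta_def \<mu>_def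
      by (rule msum_filter_le) auto
    finally show ?thesis .
  qed
  have R2: "41 * n * R\<^sup>2 = eps\<^sup>2 * P"
    using assms(7) npos unfolding P_def n_def by (simp add: field_simps) (use assms(3) in simp)
  have key: "41 * m * R\<^sup>2 \<le> eps\<^sup>2 * (De + m * D\<^sup>2)"
  proof -
    have "41 * m * R\<^sup>2 * n = m * (eps\<^sup>2 * P)" using R2 by (simp add: algebra_simps)
    also have "\<dots> \<le> m * (eps\<^sup>2 * (De + n * D\<^sup>2))"
      using PhiLe mn by (intro mult_left_mono) auto
    also have "\<dots> \<le> n * (eps\<^sup>2 * (De + m * D\<^sup>2))"
    proof -
      have "m * De \<le> n * De" using mn De0 by (intro mult_right_mono) auto
      then have "m * (De + n * D\<^sup>2) \<le> n * (De + m * D\<^sup>2)" by (simp add: algebra_simps)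
      then have "eps\<^sup>2 * (m * (De + n * D\<^sup>2)) \<le> eps\<^sup>2 * (n * (De + m * D\<^sup>2))"
        by (intro mult_left_mono) auto
      then show ?thesis by (simp add: algebra_simps)
    qed
    finally show ?thesis using npos by (simp add: mult.commute)
  qed
  have e2: "eps\<^sup>2 \<le> 1/4" 
  proof -
    have "eps\<^sup>2 \<le> (1/2)\<^sup>2" using assms(1,2) by (intro power_mono) auto
    then show ?thesis by (simp add: power2_eq_square)
  qed
  have key': "41 * (m * R\<^sup>2) \<le> eps\<^sup>2 * De + eps\<^sup>2 * (m * D\<^sup>2)"
    using key by (simp add: distrib_left mult.assoc)
  have mR0: "m * R\<^sup>2 \<ge> 0" using mn by simp
  have eDe: "eps\<^sup>2 * De \<ge> 0" using De0 by simp
  have goal: "16 * (m * R\<^sup>2) \<le> eps\<^sup>2 * De"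
  proof (cases "D \<ge> R")
    case False
    have "D\<^sup>2 \<le> R\<^sup>2" using False D0 by (intro power_mono) auto
    then have "m * D\<^sup>2 \<le> m * R\<^sup>2" using mn by (simp add: mult_left_mono)
    then have "eps\<^sup>2 * (m * D\<^sup>2) \<le> eps\<^sup>2 * (m * R\<^sup>2)" by (simp add: mult_left_mono)
    moreover have "eps\<^sup>2 * (m * R\<^sup>2) \<le> 1/4 * (m * R\<^sup>2)" using e2 mR0 by (intro mult_right_mono) auto
    ultimately show ?thesis using key' mR0 by linarith
  next
    case True
    show ?thesis
    proof (rule ccontr)
      assume H: "\<not> 16 * (m * R\<^sup>2) \<le> eps\<^sup>2 * De"
      then have mR: "m * R\<^sup>2 > 0" using eDe by linarith
      have mp: "m > 0" using mR mn by (cases "m = 0") auto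
      have Rp: "R > 0" using mR assms(6) by (cases "R = 0") auto
      have "eps\<^sup>2 * (m * (D - R)\<^sup>2) \<le> eps\<^sup>2 * De"
        using near[OF True] by (simp add: mult_left_mono)
      moreover have "m * (eps * (D - R))\<^sup>2 = eps\<^sup>2 * (m * (D - R)\<^sup>2)"
        by (simp add: power_mult_distrib)
      moreover have "m * (4 * R)\<^sup>2 = 16 * (m * R\<^sup>2)"
        by (simp add: power_mult_distrib)
      ultimately have "m * (eps * (D - R))\<^sup>2 < m * (4 * R)\<^sup>2" using H by linarith
      then have "(eps * (D - R))\<^sup>2 < (4 * R)\<^sup>2" using mp by simp
      then have "eps * (D - R) < 4 * R" using Rp power_less_imp_less_base[of "eps * (D - R)" 2 "4 * R"] by linarith
      then have "eps * D < (4 + eps) * R" by (simp add: algebra_simps)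
      then have "(eps * D)\<^sup>2 \<le> ((4 + eps) * R)\<^sup>2" using assms(1) D0
        by (intro power_mono) auto
      also have "\<dots> \<le> (9/2 * R)\<^sup>2" using assms(1,2,6) by (intro power_mono mult_right_mono) (use assms(1,2,6) in auto)
      finally have "m * (eps * D)\<^sup>2 \<le> m * (9/2 * R)\<^sup>2" using mp by (simp add: mult_left_mono)
      moreover have "m * (eps * D)\<^sup>2 = eps\<^sup>2 * (m * D\<^sup>2)"
        by (simp add: power_mult_distrib)
      moreover have "m * (9/2 * R)\<^sup>2 = 81/4 * (m * R\<^sup>2)"
        by (simp add: power_mult_distrib power2_eq_square)
      ultimately have "eps\<^sup>2 * (m * D\<^sup>2) \<le> 81/4 * (m * R\<^sup>2)" by linarith
      then show False using key' H mR by linarith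
    qed
  qed
  have "16 * real (size N) / eps\<^sup>2 * R\<^sup>2 = (16 * (m * R\<^sup>2)) / eps\<^sup>2"
    by (simp add: m_def)
  also have "\<dots> \<le> De" using goal assms(1) by (simp add: pos_divide_le_eq mult.commute)
  finally show ?thesis unfolding N_def De_def .
qed

end
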